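(* Let $I\subseteq[m-1]$ and $J\subseteq[n-1]$. Then $\mathbf m(\kappa_I(\nu),\kappa_J(\nu))=\sum_{K\subseteq[m+n-1]}d_K\,\kappa_K(\nu)$, where $$d_K=\sum_{\substack{A\subseteq[m+n],\ |A|=n:\\ (I\#_AJ)\cap c(A)=\emptyset\\ I\#_AJ\subseteq K\subseteq(I\#_AJ)\cup c(A)}}\left(\frac{1}{1-\nu}\right)^{|K\cap c_2(A)|}.$$
   Context: Fix an integer $\nu>1$ and nonnegative integers $m,n$; $C_\nu$ is the additive cyclic group of order $\nu$. $[a,b]=\{t\in\mathbb Z:a\le t\le b\}$ (empty if $a>b$), $[n]=[1,n]$. $Q_S(\nu)=\bigoplus_{s\in S}C_\nu$; $Q_n(\nu)=Q_{[n-1]}(\nu)$. For $K\subseteq[N-1]$, $\kappa_K(\nu)$ is the function on $Q_N(\nu)$ equal to $1$ at $\mathbf g$ if $\{i:g_i\neq0\}=K$ and $0$ otherwise (superclass identifier). $\psi_\nu(0)=1$, $\psi_\nu(g)=-1/(\nu-1)$ for $g\ne0$. Connectivity: for $A\subseteq[N]$, $\mathrm{conn}(A)$ = maximal subsets of consecutive integers of $A$; $A^c=[N]\setminus A$; $c_1(A)=\{\max B:B\in\mathrm{conn}(A)\}\setminus\{N\}$, $c_2(A)=\{\max B:B\in\mathrm{conn}(A^c)\}\setminus\{N\}$, $c(A)=c_1(A)\cup c_2(A)$; here $N=m+n$. For $A\subseteq[m+n]$ with $|A|=n$, write $A=\{b_1<\dots<b_n\}$, $[m+n]\setminus A=\{a_1<\dots<a_m\}$;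 $I\#_AJ=\{a_i:i\in I\}\cup\{b_j:j\in J\}$. Product: for functions $\phi$ on $Q_m(\nu)$, $\psi$ on $Q_n(\nu)$: if $m=0$ or $n=0$, $\mathbf m_A(\phi,\psi)=\phi\psi$; otherwise $\mathbf m_A(\phi,\psi)(\mathbf g)=\prod_{i\in c_2(A)}\psi_\nu(g_i)\cdot s_A(\phi,\psi)(\mathbf g')$ for $\mathbf g\in Q_{m+n}(\nu)$, with $s_A(\phi,\psi)(\mathbf h)=\phi(h_{a_1},\dots,h_{a_{m-1}})\psi_\nu(h_{a_m})\psi(h_{b_1},\dots,h_{b_{n-1}})\psi_\nu(h_{b_n})$ on $Q_{[m+n]}(\nu)$ and $\mathbf g'$ equal to $\mathbf g$ on $[m+n-1]\setminus c(A)$ and $0$ on $c(A)\cup\{m+n\}$. $\mathbf m=\sum_A\mathbf m_A$ over all $n$-subsets $A$ of $[m+n]$. *)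

theory Defs
  imports Complex_Main
begin

text \<open>Elements of Q_S(nu) = direct sum over S of C_nu, with C_nu = {0,...,nu-1};
  represented as functions nat => nat supported on S.\<close>
definition QS :: "nat set \<Rightarrow> nat \<Rightarrow> (nat \<Rightarrow> nat) set" where
  "QS S \<nu> = {g. \<forall>i. (i \<in> S \<longrightarrow> g i < \<nu>) \<and> (i \<notin> S \<longrightarrow> g i = 0)}"

definition Qn :: "nat \<Rightarrow> nat \<Rightarrow> (nat \<Rightarrow> nat) set" where
  "Qn N \<nu> = QS {1..N - 1} \<nu>"

definition kappa :: "nat \<Rightarrow> nat set \<Rightarrow> (nat \<Rightarrow> nat) \<Rightarrow> real" where
  "kappa N K g = (if {i \<in> {1..N - 1}. g i \<noteq> 0} = K then 1 else 0)"

definition psi :: "nat \<Rightarrow> nat \<Rightarrow> real" where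
  "psi \<nu> x = (if x = 0 then 1 else - 1 / (real \<nu> - 1))"

definition conn :: "nat set \<Rightarrow> nat set set" where
  "conn A = {B. B \<noteq> {} \<and> B \<subseteq> A \<and> (\<exists>a b. B = {a..b}) \<and>
      (\<forall>C. C \<subseteq> A \<and> (\<exists>a b. C = {a..b}) \<and> B \<subseteq> C \<longrightarrow> C = B)}"

definition c1 :: "nat \<Rightarrow> nat set \<Rightarrow> nat set" where
  "c1 N A = (Max ` conn A) - {N}"

definition c2 :: "nat \<Rightarrow> nat set \<Rightarrow> nat set" where
  "c2 N A = (Max ` conn ({1..N} - A)) - {N}"

definition cc :: "nat \<Rightarrow> nat set \<Rightarrow> nat set" where
  "cc N A = c1 N A \<union> c2 N A"

text \<open>For A = {b_1 < ... < b_n} and [m+n] - A = {a_1 < ... < a_m}: a_i and b_j.\<close>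
definition aelt :: "nat \<Rightarrow> nat \<Rightarrow> nat set \<Rightarrow> nat \<Rightarrow> nat" where
  "aelt m n A i = sorted_list_of_set ({1..m+n} - A) ! (i - 1)"

definition belt :: "nat set \<Rightarrow> nat \<Rightarrow> nat" where
  "belt A j = sorted_list_of_set A ! (j - 1)"

definition sharp :: "nat \<Rightarrow> nat \<Rightarrow> nat set \<Rightarrow> nat set \<Rightarrow> nat set \<Rightarrow> nat set" where
  "sharp m n A I J = aelt m n A ` I \<union> belt A ` J"

definition sA :: "nat \<Rightarrow> nat \<Rightarrow> nat \<Rightarrow> nat set \<Rightarrow> ((nat \<Rightarrow> nat) \<Rightarrow> real)
    \<Rightarrow> ((nat \<Rightarrow> nat) \<Rightarrow> real) \<Rightarrow> (nat \<Rightarrow> nat) \<Rightarrow> real" where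
  "sA \<nu> m n A \<phi> \<psi> h =
     \<phi> (\<lambda>i. if i \<in> {1..m - 1} then h (aelt m n A i) else 0) * psi \<nu> (h (aelt m n A m)) *
     \<psi> (\<lambda>j. if j \<in> {1..n - 1} then h (belt A j) else 0) * psi \<nu> (h (belt A n))"

definition mA :: "nat \<Rightarrow> nat \<Rightarrow> nat \<Rightarrow> nat set \<Rightarrow> ((nat \<Rightarrow> nat) \<Rightarrow> real)
    \<Rightarrow> ((nat \<Rightarrow> nat) \<Rightarrow> real) \<Rightarrow> (nat \<Rightarrow> nat) \<Rightarrow> real" where
  "mA \<nu> m n A \<phi> \<psi> g =
     (if m = 0 then \<phi> (\<lambda>_. 0) * \<psi> g
      else if n = 0 then \<phi> g * \<psi> (\<lambda>_. 0)
      else (\<Prod>i\<in>c2 (m+n) A. psi \<nu> (g i)) *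
        sA \<nu> m n A \<phi> \<psi>
          (\<lambda>i. if i \<in> {1..m+n-1} - cc (m+n) A then g i else 0))"

definition mprod :: "nat \<Rightarrow> nat \<Rightarrow> nat \<Rightarrow> ((nat \<Rightarrow> nat) \<Rightarrow> real)
    \<Rightarrow> ((nat \<Rightarrow> nat) \<Rightarrow> real) \<Rightarrow> (nat \<Rightarrow> nat) \<Rightarrow> real" where
  "mprod \<nu> m n \<phi> \<psi> g =
     (\<Sum>A\<in>{A. A \<subseteq> {1..m+n} \<and> card A = n}. mA \<nu> m n A \<phi> \<psi> g)"

end

theory Submission
  imports Defs
begin

lemma sl_bij:
  assumes "finite X" "card X = k"
  shows "bij_betw (\<lambda>i. sorted_list_of_set X ! (i-1)) {1..k} X"
proof -
  let ?xs = "sorted_list_of_set X"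
  have d: "distinct ?xs" and s: "set ?xs = X" and l: "length ?xs = k"
    using assms by auto
  show ?thesis unfolding bij_betw_def
  proof
    show "inj_on (\<lambda>i. ?xs ! (i - 1)) {1..k}"
    proof (rule inj_onI)
      fix x y assume "x \<in> {1..k}" "y \<in> {1..k}" "?xs ! (x - 1) = ?xs ! (y - 1)"
      then have "x - 1 = y - 1" using nth_eq_iff_index_eq[OF d] l by auto
      then show "x = y" using \<open>x \<in> {1..k}\<close> \<open>y \<in> {1..k}\<close> by auto
    qed
    show "(\<lambda>i. ?xs ! (i - 1)) ` {1..k} = X"
    proof
      show "(\<lambda>i. ?xs ! (i - 1)) ` {1..k} \<subseteq> X"
      proof
        fix y assume "y \<in> (\<lambda>i. ?xs ! (i - 1)) ` {1..k}"
        then obtain i where "i \<in> {1..k}" "y = ?xs ! (i - 1)" by blast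
        then have "i - 1 < length ?xs" using l by auto
        then show "y \<in> X" using s \<open>y = ?xs ! (i - 1)\<close> nth_mem by blast
      qed
      show "X \<subseteq> (\<lambda>i. ?xs ! (i - 1)) ` {1..k}"
      proof
        fix x assume "x \<in> X"
        then obtain j where "j < k" "?xs ! j = x" using s l by (metis in_set_conv_nth)
        then show "x \<in> (\<lambda>i. ?xs ! (i - 1)) ` {1..k}"
          by (intro image_eqI[of _ _ "Suc j"]) auto
      qed
    qed
  qed
qed

lemma sl_last:
  assumes "finite X" "card X = k" "k \<ge> 1"
  shows "sorted_list_of_set X ! (k-1) = (Max X :: nat)"
proof -
  let ?xs = "sorted_list_of_set X"
  have s: "set ?xs = X" and l: "length ?xs = k" and so: "sorted ?xs"
    using assms by auto
  have mem: "?xs ! (k-1) \<in> X" using s l assms(3) by (metis diff_less nth_mem zero_less_one less_le_trans)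
  have "\<forall>x\<in>X. x \<le> ?xs ! (k-1)"
  proof
    fix x assume "x \<in> X"
    then obtain j where "j < k" "?xs ! j = x" using s l by (metis in_set_conv_nth)
    then show "x \<le> ?xs ! (k-1)" using so l by (metis Suc_pred' assms(3) less_Suc_eq_le less_le_trans sorted_nth_mono zero_less_one diff_less)
  qed
  then show ?thesis using mem assms by (metis Max_eqI)
qed

lemma max_conn:
  assumes "finite X" "X \<noteq> {}"
  shows "Max X \<in> Max ` conn X"
proof -
  let ?x = "Max X"
  have xX: "?x \<in> X" using assms by simp
  define a where "a = (LEAST a. {a..?x} \<subseteq> X)"
  have ex: "{?x..?x} \<subseteq> X" using xX by simp
  have aX: "{a..?x} \<subseteq> X" unfolding a_def by (rule LeastI[of "\<lambda>a. {a..?x} \<subseteq> X", OF ex])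
  have amin: "\<And>a'. {a'..?x} \<subseteq> X \<Longrightarrow> a \<le> a'" unfolding a_def by (rule Least_le)
  have ax: "a \<le> ?x" using amin[OF ex] .
  have B: "{a..?x} \<in> conn X"
    unfolding conn_def
  proof (intro CollectI conjI allI impI)
    show "{a..?x} \<noteq> {}" using ax by simp
    show "{a..?x} \<subseteq> X" by (rule aX)
    show "\<exists>a' b. {a..?x} = {a'..b}" by blast
    fix C assume C: "C \<subseteq> X \<and> (\<exists>a b. C = {a..b}) \<and> {a..?x} \<subseteq> C"
    then obtain a' b where Cab: "C = {a'..b}" by blast
    have "a \<in> C" "?x \<in> C" using C ax by auto
    hence "a' \<le> a" "?x \<le> b" using Cab by auto
    have "b \<in> X" using C Cab \<open>?x \<le> b\<close> \<open>a' \<le> a\<close> ax by auto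
    hence "b \<le> ?x" using assms by simp
    have "{a'..?x} \<subseteq> X" using C Cab \<open>?x \<le> b\<close> by auto
    hence "a \<le> a'" by (rule amin)
    show "C = {a..?x}" using Cab \<open>a' \<le> a\<close> \<open>a \<le> a'\<close> \<open>?x \<le> b\<close> \<open>b \<le> ?x\<close> by simp
  qed
  have "Max {a..?x} = ?x" using ax by (intro Max_eqI) auto
  thus ?thesis using B by (metis image_eqI)
qed

lemma conn_sub: "B \<in> conn X \<Longrightarrow> finite B \<and> B \<noteq> {} \<and> B \<subseteq> X"
  unfolding conn_def by auto

lemma c2_sub: "c2 N A \<subseteq> {1..N-1}"
proof
  fix x assume "x \<in> c2 N A"
  then obtain B where B: "B \<in> conn ({1..N} - A)" "x = Max B" "x \<noteq> N" unfolding c2_def by auto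
  have "x \<in> B" using conn_sub[OF B(1)] B(2) by simp
  hence "x \<in> {1..N}" using conn_sub[OF B(1)] by auto
  thus "x \<in> {1..N-1}" using B(3) by auto
qed

lemma c2_fin: "finite (c2 N A)" using c2_sub finite_subset by blast

lemma conn_empty: "conn {} = {}" unfolding conn_def by auto

lemma conn_full: "conn {1..k} \<subseteq> {{1..k}}"
proof
  fix B assume B: "B \<in> conn {1..k}"
  then have "\<forall>C. C \<subseteq> {1..k} \<and> (\<exists>a b. C = {a..b}) \<and> B \<subseteq> C \<longrightarrow> C = B"
    "B \<subseteq> {1..k}" unfolding conn_def by auto
  then show "B \<in> {{1..k}}" by blast
qed

lemma cc_full: "cc N {1..N} = {}"
proof -
  have "c1 N {1..N} = {}"
  proof -
    have "Max ` conn {1..N} \<subseteq> {N}"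
    proof
      fix x assume "x \<in> Max ` conn {1..N}"
      then obtain B where "B \<in> conn {1..N}" "x = Max B" by blast
      then have "B = {1..N}" "B \<noteq> {}" using conn_full conn_sub by blast+
      then show "x \<in> {N}" using \<open>x = Max B\<close> by (auto intro!: Max_eqI)
    qed
    then show ?thesis unfolding c1_def by blast
  qed
  moreover have "c2 N {1..N} = {}" unfolding c2_def using conn_empty by simp
  ultimately show ?thesis unfolding cc_def by simp
qed

lemma cc_empty: "cc N {} = {}"
proof -
  have "c2 N {} = {}"
  proof -
    have "Max ` conn {1..N} \<subseteq> {N}"
    proof
      fix x assume "x \<in> Max ` conn {1..N}"
      then obtain B where "B \<in> conn {1..N}" "x = Max B" by blast
      then have "B = {1..N}" "B \<noteq> {}" using conn_full conn_sub by blast+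
      then show "x \<in> {N}" using \<open>x = Max B\<close> by (auto intro!: Max_eqI)
    qed
    then show ?thesis unfolding c2_def by auto
  qed
  moreover have "c1 N {} = {}" unfolding c1_def using conn_empty by simp
  ultimately show ?thesis unfolding cc_def by simp
qed

lemma sl_interval: "j \<in> {1..k} \<Longrightarrow> sorted_list_of_set {1..k} ! (j-1) = (j::nat)"
proof -
  assume j: "j \<in> {1..k}"
  have "{1..k} = {1..<Suc k}" by auto
  then have e: "sorted_list_of_set {1..k} = [1..<Suc k]" by (simp del: upt_Suc)
  have "[1..<Suc k] ! (j-1) = 1 + (j-1)" using j by (intro nth_upt) auto
  then show ?thesis using j e by auto
qed

lemma comb:
  fixes m n :: nat
  assumes a: "bij_betw a {1..m} X" and b: "bij_betw b {1..n} Y" and XY: "X \<inter> Y = {}"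
    and T: "T \<subseteq> X \<union> Y" and am: "a m \<notin> T" and bn: "b n \<notin> T"
    and I: "I \<subseteq> {1..m-1}" and J: "J \<subseteq> {1..n-1}"
  shows "({i\<in>{1..m-1}. a i \<in> T} = I \<and> {j\<in>{1..n-1}. b j \<in> T} = J) \<longleftrightarrow> T = a ` I \<union> b ` J"
proof
  assume h: "{i\<in>{1..m-1}. a i \<in> T} = I \<and> {j\<in>{1..n-1}. b j \<in> T} = J"
  show "T = a ` I \<union> b ` J"
  proof
    show "T \<subseteq> a ` I \<union> b ` J"
    proof
      fix x assume xT: "x \<in> T"
      show "x \<in> a ` I \<union> b ` J"
      proof (cases "x \<in> X")
        case True
        then obtain i where i: "i \<in> {1..m}" "x = a i" using a unfolding bij_betw_def by blast
        then have "i \<noteq> m" using am xT by auto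
        then have "i \<in> {1..m-1}" using i(1) by auto
        then have "i \<in> {i\<in>{1..m-1}. a i \<in> T}" using i xT by auto
        then show ?thesis using h i by auto
      next
        case False
        then have "x \<in> Y" using xT T by auto
        then obtain i where i: "i \<in> {1..n}" "x = b i" using b unfolding bij_betw_def by blast
        then have "i \<noteq> n" using bn xT by auto
        then have "i \<in> {1..n-1}" using i(1) by auto
        then have "i \<in> {j\<in>{1..n-1}. b j \<in> T}" using i xT by auto
        then show ?thesis using h i by auto
      qed
    qed
    show "a ` I \<union> b ` J \<subseteq> T" using h by auto
  qed
next
  assume h: "T = a ` I \<union> b ` J"
  have ia: "inj_on a {1..m}" and ib: "inj_on b {1..n}" using a b by (auto simp: bij_betw_def)
  have aX: "a ` {1..m} = X" and bY: "b ` {1..n} = Y" using a b by (auto simp: bij_betw_def)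
  have Im: "I \<subseteq> {1..m}" using I by (meson atLeastatMost_subset_iff diff_le_self order_refl order_trans)
  have Jn: "J \<subseteq> {1..n}" using J by (meson atLeastatMost_subset_iff diff_le_self order_refl order_trans)
  have aIX: "a ` I \<subseteq> X" using Im aX by auto
  have bJY: "b ` J \<subseteq> Y" using Jn bY by auto
  have "{i\<in>{1..m-1}. a i \<in> T} = I"
  proof (intro set_eqI iffI)
    fix i assume "i \<in> {i\<in>{1..m-1}. a i \<in> T}"
    then have i: "i \<in> {1..m}" "a i \<in> a ` I \<union> b ` J" using h by auto
    have "a i \<in> X" using i aX by auto
    then have "a i \<in> a ` I" using i XY bJY by blast
    then obtain i' where i': "i' \<in> I" "a i = a i'" by blast
    have "i' \<in> {1..m}" using i' Im by blast
    then have "i = i'" using inj_onD[OF ia] i(1) i'(2) by blast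
    then show "i \<in> I" using i' by simp
  next
    fix i assume "i \<in> I" then show "i \<in> {i\<in>{1..m-1}. a i \<in> T}" using I h by auto
  qed
  moreover have "{j\<in>{1..n-1}. b j \<in> T} = J"
  proof (intro set_eqI iffI)
    fix i assume "i \<in> {i\<in>{1..n-1}. b i \<in> T}"
    then have i: "i \<in> {1..n}" "b i \<in> a ` I \<union> b ` J" using h by auto
    have "b i \<in> Y" using i bY by auto
    then have "b i \<in> b ` J" using i XY aIX by blast
    then obtain i' where i': "i' \<in> J" "b i = b i'" by blast
    have "i' \<in> {1..n}" using i' Jn by blast
    then have "i = i'" using inj_onD[OF ib] i(1) i'(2) by blast
    then show "i \<in> J" using i' by simp
  next
    fix i assume "i \<in> J" then show "i \<in> {i\<in>{1..n-1}. b i \<in> T}" using J h by auto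
  qed
  ultimately show "{i\<in>{1..m-1}. a i \<in> T} = I \<and> {j\<in>{1..n-1}. b j \<in> T} = J" by blast
qed

lemma prod_psi:
  assumes "finite C"
  shows "(\<Prod>i\<in>C. psi \<nu> (g i)) = (1 / (1 - real \<nu>)) ^ card (C \<inter> {i. g i \<noteq> 0})"
proof -
  have e: "- 1 / (real \<nu> - 1) = 1 / (1 - real \<nu>)"
  proof -
    have "1 - real \<nu> = - (real \<nu> - 1)" by simp
    then show ?thesis by (simp only: divide_minus_right minus_divide_left)
  qed
  have "(\<Prod>i\<in>C. psi \<nu> (g i)) = (\<Prod>i\<in>C. if i \<in> {i. g i \<noteq> 0} then 1 / (1 - real \<nu>) else 1)"
  proof (rule prod.cong)
    fix i assume "i \<in> C"
    show "psi \<nu> (g i) = (if i \<in> {i. g i \<noteq> 0} then 1 / (1 - real \<nu>) else 1)"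
    proof (cases "g i = 0")
      case True then show ?thesis by (simp add: psi_def)
    next
      case False
      then have "psi \<nu> (g i) = - 1 / (real \<nu> - 1)" by (simp add: psi_def)
      then show ?thesis using False e by simp
    qed
  qed simp
  also have "\<dots> = (1 / (1 - real \<nu>)) ^ card (C \<inter> {i. g i \<noteq> 0})"
    using assms by (simp add: prod.If_cases)
  finally show ?thesis .
qed

lemma perA:
  fixes m n \<nu> :: nat and I J :: "nat set" and g :: "nat \<Rightarrow> nat"
  assumes m: "m \<ge> 1" and n: "n \<ge> 1" and A: "A \<subseteq> {1..m+n}" and cA: "card A = n"
    and I: "I \<subseteq> {1..m - 1}" and J: "J \<subseteq> {1..n - 1}"
  shows "mA \<nu> m n A (kappa m I) (kappa n J) g =
    (if {i\<in>{1..m+n-1}. g i \<noteq> 0} - cc (m+n) A = sharp m n A I J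
     then (1 / (1 - real \<nu>)) ^ card ({i\<in>{1..m+n-1}. g i \<noteq> 0} \<inter> c2 (m+n) A) else 0)"
proof -
  define N where "N = m + n"
  define a where "a = aelt m n A"
  define b where "b = belt A"
  define g' where "g' = (\<lambda>i. if i \<in> {1..N-1} - cc N A then g i else 0)"
  define S where "S = {i\<in>{1..N-1}. g i \<noteq> 0}"
  define T where "T = {x. g' x \<noteq> 0}"
  have finA: "finite A" using A finite_subset by blast
  have cardX: "card ({1..N} - A) = m" using A cA unfolding N_def by (simp add: card_Diff_subset finA)
  have finX: "finite ({1..N} - A)" by simp
  have abij: "bij_betw a {1..m} ({1..N} - A)"
    unfolding a_def aelt_def N_def using sl_bij[OF finX cardX] unfolding N_def .
  have bbij: "bij_betw b {1..n} A" unfolding b_def belt_def using sl_bij[OF finA cA] .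
  have am: "a m = Max ({1..N} - A)" unfolding a_def aelt_def
    using sl_last[OF finX cardX m] unfolding N_def .
  have bn: "b n = Max A" unfolding b_def belt_def using sl_last[OF finA cA n] .
  have Xne: "{1..N} - A \<noteq> {}"
  proof
    assume "{1..N} - A = {}"
    then have "card ({1..N} - A) = 0" by (simp only: card.empty)
    then show False using cardX m by linarith
  qed
  have Ane: "A \<noteq> {}" using cA n by auto
  have N1: "N \<ge> 1" using m N_def by simp
  have AN: "A \<subseteq> {1..N}" using A N_def by simp
  have zero: "g' (a m) = 0 \<and> g' (b n) = 0"
  proof (cases "N \<in> A")
    case True
    have "Max A = N" using True AN finA by (intro Max_eqI) auto
    then have "g' (b n) = 0" using bn unfolding g'_def by auto
    moreover have "Max ({1..N} - A) \<in> c2 N A"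
    proof -
      have "Max ({1..N} - A) \<in> Max ` conn ({1..N} - A)" using max_conn[OF finX Xne] .
      moreover have "Max ({1..N} - A) \<noteq> N" using True Max_in[OF finX Xne] by auto
      ultimately show ?thesis unfolding c2_def by blast
    qed
    then have "g' (a m) = 0" using am unfolding g'_def cc_def by auto
    ultimately show ?thesis by simp
  next
    case False
    have "Max ({1..N} - A) = N" using False N1 by (intro Max_eqI) auto
    then have "g' (a m) = 0" using am unfolding g'_def by auto
    moreover have "Max A \<in> c1 N A"
    proof -
      have "Max A \<in> Max ` conn A" using max_conn[OF finA Ane] .
      moreover have "Max A \<noteq> N" using False Max_in[OF finA Ane] by auto
      ultimately show ?thesis unfolding c1_def by blast
    qed
    then have "g' (b n) = 0" using bn unfolding g'_def cc_def by auto
    ultimately show ?thesis by simp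
  qed
  have TS: "T = S - cc N A" unfolding T_def S_def g'_def by auto
  have Tsub: "T \<subseteq> ({1..N} - A) \<union> A" unfolding T_def g'_def by auto
  have XY: "({1..N} - A) \<inter> A = {}" by auto
  have cmb: "({i\<in>{1..m-1}. a i \<in> T} = I \<and> {j\<in>{1..n-1}. b j \<in> T} = J) \<longleftrightarrow> T = a ` I \<union> b ` J"
    by (rule comb[OF abij bbij XY Tsub _ _ I J]) (use zero T_def in auto)
  have k1: "kappa m I (\<lambda>i. if i \<in> {1..m-1} then g' (a i) else 0) = (if {i\<in>{1..m-1}. a i \<in> T} = I then 1 else 0)"
  proof -
    have "{i \<in> {1..m - 1}. (if i \<in> {1..m-1} then g' (a i) else 0) \<noteq> 0} = {i\<in>{1..m-1}. a i \<in> T}"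
      unfolding T_def by auto
    then show ?thesis unfolding kappa_def by simp
  qed
  have k2: "kappa n J (\<lambda>i. if i \<in> {1..n-1} then g' (b i) else 0) = (if {i\<in>{1..n-1}. b i \<in> T} = J then 1 else 0)"
  proof -
    have "{i \<in> {1..n - 1}. (if i \<in> {1..n-1} then g' (b i) else 0) \<noteq> 0} = {i\<in>{1..n-1}. b i \<in> T}"
      unfolding T_def by auto
    then show ?thesis unfolding kappa_def by simp
  qed
  have sA: "sA \<nu> m n A (kappa m I) (kappa n J) g' = (if T = sharp m n A I J then 1 else 0)"
  proof -
    have "sA \<nu> m n A (kappa m I) (kappa n J) g' = (if {i\<in>{1..m-1}. a i \<in> T} = I then 1 else 0) * psi \<nu> (g' (a m))
       * (if {i\<in>{1..n-1}. b i \<in> T} = J then 1 else 0) * psi \<nu> (g' (b n))"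
      unfolding sA_def a_def[symmetric] b_def[symmetric] k1 k2 by (rule refl)
    also have "\<dots> = (if {i\<in>{1..m-1}. a i \<in> T} = I \<and> {j\<in>{1..n-1}. b j \<in> T} = J then 1 else 0)"
      using zero by (simp add: psi_def)
    also have "\<dots> = (if T = sharp m n A I J then 1 else 0)"
      unfolding sharp_def a_def[symmetric] b_def[symmetric] by (simp only: cmb)
    finally show ?thesis .
  qed
  have pr: "(\<Prod>i\<in>c2 N A. psi \<nu> (g i)) = (1 / (1 - real \<nu>)) ^ card (S \<inter> c2 N A)"
  proof -
    have "c2 N A \<inter> {i. g i \<noteq> 0} = S \<inter> c2 N A" unfolding S_def using c2_sub by blast
    then show ?thesis using prod_psi[OF c2_fin[of N A], of \<nu> g] by simp
  qed
  have "mA \<nu> m n A (kappa m I) (kappa n J) g = (\<Prod>i\<in>c2 N A. psi \<nu> (g i)) * sA \<nu> m n A (kappa m I) (kappa n J) g'"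
  proof -
    have m0: "(m = 0) = False" and n0: "(n = 0) = False" using m n by auto
    show ?thesis unfolding mA_def g'_def N_def m0 n0 if_False by (rule refl)
  qed
  also have "\<dots> = (if S - cc N A = sharp m n A I J then (1 / (1 - real \<nu>)) ^ card (S \<inter> c2 N A) else 0)"
    unfolding pr sA TS by simp
  finally show ?thesis unfolding S_def N_def .
qed


lemma perA_m0:
  fixes n \<nu> :: nat and I J :: "nat set" and g :: "nat \<Rightarrow> nat"
  assumes A: "A \<subseteq> {1..0+n}" and cA: "card A = n"
    and I: "I \<subseteq> {1..0 - 1}" and J: "J \<subseteq> {1..n - 1}"
  shows "mA \<nu> 0 n A (kappa 0 I) (kappa n J) g =
    (if {i\<in>{1..0+n-1}. g i \<noteq> 0} - cc (0+n) A = sharp 0 n A I J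
     then (1 / (1 - real \<nu>)) ^ card ({i\<in>{1..0+n-1}. g i \<noteq> 0} \<inter> c2 (0+n) A) else 0)"
proof -
  have AA: "A = {1..n}" using A cA by (intro card_subset_eq) auto
  have I0: "I = {}" using I by auto
  have k0: "kappa 0 I (\<lambda>_. 0) = 1" unfolding kappa_def I0 by simp
  have ccn: "cc n {1..n} = {}" by (rule cc_full)
  have c2n: "c2 n {1..n} = {}" using ccn unfolding cc_def by blast
  have Jn: "J \<subseteq> {1..n}" using J by (meson atLeastatMost_subset_iff diff_le_self order_refl order_trans)
  have sh: "sharp 0 n {1..n} I J = J"
  proof -
    have "belt {1..n} ` J = J"
    proof -
      have "belt {1..n} j = j" if "j \<in> J" for j
        unfolding belt_def using sl_interval[of j n] Jn that by blast
      then show ?thesis by (simp add: image_cong)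
    qed
    then show ?thesis unfolding sharp_def I0 by simp
  qed
  have "mA \<nu> 0 n A (kappa 0 I) (kappa n J) g = kappa n J g" unfolding mA_def using k0 by simp
  also have "\<dots> = (if {i\<in>{1..n-1}. g i \<noteq> 0} = J then 1 else 0)" unfolding kappa_def by (rule refl)
  finally show ?thesis unfolding AA using ccn c2n sh by simp
qed

lemma perA_n0:
  fixes m \<nu> :: nat and I J :: "nat set" and g :: "nat \<Rightarrow> nat"
  assumes m: "m \<ge> 1" and A: "A \<subseteq> {1..m+0}" and cA: "card A = 0"
    and I: "I \<subseteq> {1..m - 1}" and J: "J \<subseteq> {1..0 - 1}"
  shows "mA \<nu> m 0 A (kappa m I) (kappa 0 J) g =
    (if {i\<in>{1..m+0-1}. g i \<noteq> 0} - cc (m+0) A = sharp m 0 A I J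
     then (1 / (1 - real \<nu>)) ^ card ({i\<in>{1..m+0-1}. g i \<noteq> 0} \<inter> c2 (m+0) A) else 0)"
proof -
  have AA: "A = {}" using A cA finite_subset by (metis card_eq_0_iff finite_atLeastAtMost)
  have J0: "J = {}" using J by auto
  have k0: "kappa 0 J (\<lambda>_. 0) = 1" unfolding kappa_def J0 by simp
  have ccn: "cc m {} = {}" by (rule cc_empty)
  have c2n: "c2 m {} = {}" using ccn unfolding cc_def by blast
  have Im: "I \<subseteq> {1..m}" using I by (meson atLeastatMost_subset_iff diff_le_self order_refl order_trans)
  have sh: "sharp m 0 {} I J = I"
  proof -
    have "aelt m 0 {} ` I = I"
    proof -
      have "aelt m 0 {} j = j" if "j \<in> I" for j
        unfolding aelt_def using sl_interval[of j m] Im that by auto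
      then show ?thesis by (simp add: image_cong)
    qed
    then show ?thesis unfolding sharp_def J0 by simp
  qed
  have m0: "(m = 0) = False" using m by simp
  have "mA \<nu> m 0 A (kappa m I) (kappa 0 J) g = kappa m I g" unfolding mA_def m0 if_False using k0 by simp
  also have "\<dots> = (if {i\<in>{1..m-1}. g i \<noteq> 0} = I then 1 else 0)" unfolding kappa_def by (rule refl)
  finally show ?thesis unfolding AA using ccn c2n sh by simp
qed


lemma perA_all:
  fixes m n \<nu> :: nat and I J :: "nat set" and g :: "nat \<Rightarrow> nat"
  assumes A: "A \<subseteq> {1..m+n}" and cA: "card A = n"
    and I: "I \<subseteq> {1..m - 1}" and J: "J \<subseteq> {1..n - 1}"
  shows "mA \<nu> m n A (kappa m I) (kappa n J) g =
    (if {i\<in>{1..m+n-1}. g i \<noteq> 0} - cc (m+n) A = sharp m n A I J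
     then (1 / (1 - real \<nu>)) ^ card ({i\<in>{1..m+n-1}. g i \<noteq> 0} \<inter> c2 (m+n) A) else 0)"
proof (cases "m = 0")
  case True
  then show ?thesis using perA_m0[of A n I J \<nu> g] A cA I J by simp
next
  case False
  then have m: "m \<ge> 1" by simp
  show ?thesis
  proof (cases "n = 0")
    case True
    then show ?thesis using perA_n0[OF m, of A I J \<nu> g] A cA I J by simp
  next
    case False
    then show ?thesis using perA[OF m _ A cA I J] by simp
  qed
qed

theorem proposition3p15:
  fixes \<nu> m n :: nat and I J :: "nat set"
  assumes "\<nu> > 1"
    and "I \<subseteq> {1..m - 1}" and "J \<subseteq> {1..n - 1}"
  shows "\<forall>g \<in> Qn (m+n) \<nu>.
    mprod \<nu> m n (kappa m I) (kappa n J) g =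
    (\<Sum>K\<in>Pow {1..m+n-1}.
       (\<Sum>A\<in>{A. A \<subseteq> {1..m+n} \<and> card A = n \<and>
                 sharp m n A I J \<inter> cc (m+n) A = {} \<and>
                 sharp m n A I J \<subseteq> K \<and> K \<subseteq> sharp m n A I J \<union> cc (m+n) A}.
          (1 / (1 - real \<nu>)) ^ card (K \<inter> c2 (m+n) A)) * kappa (m+n) K g)"
proof
  fix g assume "g \<in> Qn (m+n) \<nu>"
  define S where "S = {i\<in>{1..m+n-1}. g i \<noteq> 0}"
  define base where "base = {A. A \<subseteq> {1..m+n} \<and> card A = n}"
  define F where "F = (\<lambda>A. (if S - cc (m+n) A = sharp m n A I J
     then (1 / (1 - real \<nu>)) ^ card (S \<inter> c2 (m+n) A) else (0::real)))"
  define h where "h = (\<lambda>K. (\<Sum>A\<in>{A. A \<subseteq> {1..m+n} \<and> card A = n \<and>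
                 sharp m n A I J \<inter> cc (m+n) A = {} \<and>
                 sharp m n A I J \<subseteq> K \<and> K \<subseteq> sharp m n A I J \<union> cc (m+n) A}.
          (1 / (1 - real \<nu>)) ^ card (K \<inter> c2 (m+n) A)))"
  have finbase: "finite base"
  proof -
    have "base \<subseteq> Pow {1..m+n}" unfolding base_def by auto
    then show ?thesis by (rule finite_subset) simp
  qed
  have L: "mprod \<nu> m n (kappa m I) (kappa n J) g = sum F base"
    unfolding mprod_def base_def[symmetric]
  proof (rule sum.cong[OF refl])
    fix A assume "A \<in> base"
    then show "mA \<nu> m n A (kappa m I) (kappa n J) g = F A"
      unfolding F_def S_def base_def using perA_all[of A m n I J \<nu> g] assms by auto
  qed
  have kap: "kappa (m+n) K g = (if S = K then 1 else 0)" for K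
    unfolding kappa_def S_def by (rule refl)
  have "(\<Sum>K\<in>Pow {1..m+n-1}. h K * kappa (m+n) K g) = (\<Sum>K\<in>Pow {1..m+n-1}. if S = K then h K else 0)"
    unfolding kap by (rule sum.cong) auto
  also have "\<dots> = h S"
  proof -
    have "S \<in> Pow {1..m+n-1}" unfolding S_def by auto
    then show ?thesis by simp
  qed
  also have "h S = sum F base"
  proof -
    have eq: "{A. A \<subseteq> {1..m+n} \<and> card A = n \<and>
                 sharp m n A I J \<inter> cc (m+n) A = {} \<and>
                 sharp m n A I J \<subseteq> S \<and> S \<subseteq> sharp m n A I J \<union> cc (m+n) A}
          = {A \<in> base. S - cc (m+n) A = sharp m n A I J}"
      unfolding base_def by blast
    show ?thesis unfolding h_def eq sum.inter_filter[OF finbase] F_def by (rule refl)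
  qed
  finally show "mprod \<nu> m n (kappa m I) (kappa n J) g =
    (\<Sum>K\<in>Pow {1..m+n-1}.
       (\<Sum>A\<in>{A. A \<subseteq> {1..m+n} \<and> card A = n \<and>
                 sharp m n A I J \<inter> cc (m+n) A = {} \<and>
                 sharp m n A I J \<subseteq> K \<and> K \<subseteq> sharp m n A I J \<union> cc (m+n) A}.
          (1 / (1 - real \<nu>)) ^ card (K \<inter> c2 (m+n) A)) * kappa (m+n) K g)"
    unfolding h_def L by simp
qed

end
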